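(* Let $\alpha$ be a nonzero real number and let $\gamma\colon I\to\mathbb S^2$ be a properly immersed $\alpha$-stationary curve. Suppose that the north pole $N$ is not an adherent point of $\gamma(I)$ and that $\gamma(I)\cap\mathbb S^2_+\neq\emptyset$, where $\mathbb S^2_+=\mathbb S^2\cap\{z>0\}$. Then $\alpha>-1$.
   Context: $\mathbb S^2\subset\mathbb R^3$ is the unit sphere with the Euclidean inner product $\langle,\rangle$. It is parametrized by $\Psi(u,v)=(\sin u\cos v,\sin u\sin v,\cos u)$, and $N=(0,0,1)$. The spherical distance from $\Psi(u,v)$ to $N$ is $u\in[0,\pi]$. For a curve $\gamma(t)=\Psi(u(t),v(t))$ avoiding $N$, the energy is $$E_\alpha[\gamma]=\int_\gamma\mathsf d^\alpha ds=\int u^\alpha\sqrt{u'^2+\sin^2(u)v'^2}\,dt,$$ where $\mathsf d$ is the distance to $N$. The curve is $\alpha$-stationary if it is a critical point of $E_\alpha$ (Euler–Lagrange equations). Equivalently, $\kappa=\alpha\langle\mathbf n,\xi\rangle/\mathsf d$, with $\mathbf n=(\gamma'\times\gamma)/|\gamma'|$, $\kappa=\langle\gamma'',\mathbf n\rangle/|\gamma'|^2$, and $\xi=\Psi_u$. Throughout the paper, $\alpha\ne0$. *)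

theory Defs
  imports "HOL-Analysis.Analysis" "HOL-Analysis.Cross3"
begin

definition Npole :: "real^3" where
  "Npole = vector [0, 0, 1]"

definition dN :: "real^3 \<Rightarrow> real" where
  "dN p = arccos (p \<bullet> Npole)"

text \<open>xi = Psi_u written intrinsically: at p = Psi(u,v) with 0 < u < pi,
  Psi_u = (<p,N> p - N) / sin u, and sin u = sqrt(1 - <p,N>^2).\<close>
definition xi :: "real^3 \<Rightarrow> real^3" where
  "xi p = (1 / sqrt (1 - (p \<bullet> Npole)\<^sup>2)) *\<^sub>R ((p \<bullet> Npole) *\<^sub>R p - Npole)"

definition vel :: "(real \<Rightarrow> real^3) \<Rightarrow> real \<Rightarrow> real^3" where
  "vel \<gamma> t = vector_derivative \<gamma> (at t)"

definition acc :: "(real \<Rightarrow> real^3) \<Rightarrow> real \<Rightarrow> real^3" where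
  "acc \<gamma> t = vector_derivative (vel \<gamma>) (at t)"

definition nrm :: "(real \<Rightarrow> real^3) \<Rightarrow> real \<Rightarrow> real^3" where
  "nrm \<gamma> t = (1 / norm (vel \<gamma> t)) *\<^sub>R cross3 (vel \<gamma> t) (\<gamma> t)"

definition curv :: "(real \<Rightarrow> real^3) \<Rightarrow> real \<Rightarrow> real" where
  "curv \<gamma> t = (acc \<gamma> t \<bullet> nrm \<gamma> t) / (norm (vel \<gamma> t))\<^sup>2"

definition immersed_sphere_curve :: "(real \<Rightarrow> real^3) \<Rightarrow> real set \<Rightarrow> bool" where
  "immersed_sphere_curve \<gamma> I \<longleftrightarrow>
     open I \<and> is_interval I \<and> I \<noteq> {} \<and>
     (\<forall>t\<in>I. norm (\<gamma> t) = 1 \<and> \<gamma> t \<noteq> Npole) \<and>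
     (\<forall>t\<in>I. \<gamma> differentiable (at t)) \<and>
     (\<forall>t\<in>I. vel \<gamma> differentiable (at t)) \<and>
     continuous_on I (acc \<gamma>) \<and>
     (\<forall>t\<in>I. vel \<gamma> t \<noteq> 0)"

definition properly_immersed :: "(real \<Rightarrow> real^3) \<Rightarrow> real set \<Rightarrow> bool" where
  "properly_immersed \<gamma> I \<longleftrightarrow> immersed_sphere_curve \<gamma> I \<and>
     ((I = UNIV \<and> (\<exists>T>0. \<forall>t. \<gamma> (t + T) = \<gamma> t)) \<or>
      (\<forall>K. compact K \<and> K \<subseteq> sphere 0 1 - {Npole} \<longrightarrow> compact {t\<in>I. \<gamma> t \<in> K}))"

text \<open>alpha-stationary: kappa = alpha <n, xi> / d, at every point where xi is defined
  (i.e. away from the south pole).\<close>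
definition alpha_stationary :: "real \<Rightarrow> (real \<Rightarrow> real^3) \<Rightarrow> real set \<Rightarrow> bool" where
  "alpha_stationary \<alpha> \<gamma> I \<longleftrightarrow>
     (\<forall>t\<in>I. \<gamma> t \<noteq> - Npole \<longrightarrow>
        curv \<gamma> t = \<alpha> * (nrm \<gamma> t \<bullet> xi (\<gamma> t)) / dN (\<gamma> t))"

end

theory Submission
  imports Defs
begin
lemma inner_deriv:
  fixes f g :: "real \<Rightarrow> real^3"
  assumes "(f has_vector_derivative f') (at t)" "(g has_vector_derivative g') (at t)"
  shows "((\<lambda>t. f t \<bullet> g t) has_real_derivative (f t \<bullet> g' + f' \<bullet> g t)) (at t)"
proof -
  have "((\<lambda>t. f t \<bullet> g t) has_derivative (\<lambda>h. f t \<bullet> (h *\<^sub>R g') + (h *\<^sub>R f') \<bullet> g t)) (at t)"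
    using assms unfolding has_vector_derivative_def by (intro has_derivative_inner) auto
  moreover have eq: "(\<lambda>h. f t \<bullet> (h *\<^sub>R g') + (h *\<^sub>R f') \<bullet> g t) = (*) (f t \<bullet> g' + f' \<bullet> g t)"
    by (auto simp: fun_eq_iff algebra_simps)
  ultimately show ?thesis unfolding has_field_derivative_def by simp
qed
lemma sin_gt: fixes x :: real assumes "0<x" "x<pi/2" shows "x * cos x < sin x"
proof -
  have "(\<lambda>x. sin x - x * cos x) 0 < (\<lambda>x. sin x - x * cos x) x"
  proof (rule DERIV_pos_imp_increasing_open[OF assms(1)])
    fix y assume y: "0 < y" "y < x"
    then have "sin y > 0" using sin_gt_zero[of y] assms pi_gt3 by simp
    moreover have "DERIV (\<lambda>x. sin x - x * cos x) y :> cos y - (cos y - y * sin y)" 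
      by (auto intro!: derivative_eq_intros)
    ultimately show "\<exists>d. DERIV (\<lambda>x. sin x - x * cos x) y :> d \<and> d > 0"
      using y by (intro exI[of _ "cos y - (cos y - y * sin y)"]) simp
  next show "continuous_on {0..x} (\<lambda>x. sin x - x * cos x)" by (intro continuous_intros)
  qed
  then show ?thesis by simp
qed

lemma fin: fixes A B V s u aN h0 \<alpha> :: real
  assumes V: "V > 0" and s: "s > 0" and u: "u > 0"
  and E: "A / V^3 = \<alpha> * (- B / (V * s)) / u"
  and G1: "A * B = V^2 * (aN + V^2 * h0)" and G2: "B * B = V^2 * s^2"
  and aN: "aN \<le> 0" and key: "u * h0 < s"
  shows "\<alpha> > -1"
proof -
  from E have A: "A = - \<alpha> * B * V^2 / (s * u)" using V s u by (simp add: field_simps power3_eq_cube power2_eq_square)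
  have "A * B = - \<alpha> * (B*B) * V^2 / (s * u)" by (simp add: A)
  also have "\<dots> = - \<alpha> * V^4 * s / u" using G2 s u by (simp add: field_simps power2_eq_square power4_eq_xxxx)
  finally have "V^2 * (aN + V^2 * h0) = - \<alpha> * V^4 * s / u" using G1 by simp
  moreover have "- \<alpha> * V^4 * s / u = V^2 * (- \<alpha> * V^2 * s / u)" by (simp add: field_simps power2_eq_square power4_eq_xxxx)
  ultimately have "V^2 * (aN + V^2 * h0) = V^2 * (- \<alpha> * V^2 * s / u)" by simp
  then have "aN + V^2 * h0 = - \<alpha> * V^2 * s / u" using V mult_left_cancel[of "V^2" "aN + V^2 * h0" "- \<alpha> * V^2 * s / u"] by (simp del: mult_minus_left minus_divide_left)
  then have "aN * u = -(V^2) * (h0 * u + \<alpha> * s)" using u by (simp add: field_simps)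
  moreover have "aN * u \<le> 0" using aN u by (simp add: mult_nonpos_nonneg)
  ultimately have "V^2 * (h0 * u + \<alpha> * s) \<ge> 0" by simp
  moreover have "V^2 > 0" using V by simp
  ultimately have "h0 * u + \<alpha> * s \<ge> 0" by (simp add: zero_le_mult_iff)
  with key s have "\<alpha> * s > - s" by (simp add: mult.commute)
  then show ?thesis using s by (metis mult_minus_left mult_less_cancel_right_pos mult_1 mult.commute)
qed

lemma gram1: fixes a v p n :: "real^3"
  shows "(a \<bullet> cross3 v p) * (n \<bullet> cross3 v p) =
   (a\<bullet>n)*((v\<bullet>v)*(p\<bullet>p) - (v\<bullet>p)*(p\<bullet>v)) - (a\<bullet>v)*((v\<bullet>n)*(p\<bullet>p) - (v\<bullet>p)*(p\<bullet>n)) + (a\<bullet>p)*((v\<bullet>n)*(p\<bullet>v) - (v\<bullet>v)*(p\<bullet>n))"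
  by (simp add: cross3_def inner_vec_def sum_3 algebra_simps)

lemma NN: "Npole \<bullet> Npole = 1"
  by (simp_all add: Npole_def inner_vec_def sum_3)

theorem theorem3p5:
  fixes \<alpha> :: real and \<gamma> :: "real \<Rightarrow> real^3" and I :: "real set"
  assumes "\<alpha> \<noteq> 0"
    and "properly_immersed \<gamma> I"
    and "alpha_stationary \<alpha> \<gamma> I"
    and "Npole \<notin> closure (\<gamma> ` I)"
    and "\<exists>t\<in>I. \<gamma> t \<bullet> Npole > 0"
  shows "\<alpha> > -1"
proof -
  have imm: "immersed_sphere_curve \<gamma> I" and per: "(I = UNIV \<and> (\<exists>T>0. \<forall>t. \<gamma> (t + T) = \<gamma> t)) \<or>
      (\<forall>K. compact K \<and> K \<subseteq> sphere 0 1 - {Npole} \<longrightarrow> compact {t\<in>I. \<gamma> t \<in> K})"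
    using assms(2) unfolding properly_immersed_def by auto
  have Io: "open I" "I \<noteq> {}" and sph: "\<And>t. t \<in> I \<Longrightarrow> norm (\<gamma> t) = 1 \<and> \<gamma> t \<noteq> Npole"
    and dg: "\<And>t. t \<in> I \<Longrightarrow> \<gamma> differentiable (at t)"
    and dv: "\<And>t. t \<in> I \<Longrightarrow> vel \<gamma> differentiable (at t)"
    and vnz: "\<And>t. t \<in> I \<Longrightarrow> vel \<gamma> t \<noteq> 0"
    using imm unfolding immersed_sphere_curve_def by auto
  have IU: "I = UNIV \<and> (\<exists>T>0. \<forall>t. \<gamma> (t + T) = \<gamma> t)"
  proof (rule ccontr)
    assume "\<not> ?thesis"
    with per have Kp: "\<forall>K. compact K \<and> K \<subseteq> sphere 0 1 - {Npole} \<longrightarrow> compact {t\<in>I. \<gamma> t \<in> K}"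
      by blast
    let ?K = "closure (\<gamma> ` I)"
    have "\<gamma> ` I \<subseteq> sphere 0 1" using sph by auto
    hence Ks: "?K \<subseteq> sphere 0 1" by (simp add: closure_minimal)
    hence "compact ?K" using bounded_subset[OF bounded_sphere Ks] compact_eq_bounded_closed by blast
    moreover have "?K \<subseteq> sphere 0 1 - {Npole}" using Ks assms(4) by auto
    ultimately have "compact {t\<in>I. \<gamma> t \<in> ?K}" using Kp by blast
    moreover have "{t\<in>I. \<gamma> t \<in> ?K} = I" using closure_subset[of "\<gamma> ` I"] by auto
    ultimately have "compact I" by simp
    hence "closed I" by (rule compact_imp_closed)
    with Io have "I = {} \<or> I = UNIV" using clopen by blast
    with Io \<open>compact I\<close> show False by auto
  qed
  then obtain T where T: "T > 0" "\<And>t. \<gamma> (t + T) = \<gamma> t" and IUNIV: "I = UNIV" by blast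
  have sph: "\<And>t. norm (\<gamma> t) = 1 \<and> \<gamma> t \<noteq> Npole" and dg: "\<And>t. \<gamma> differentiable (at t)"
    and dv: "\<And>t. vel \<gamma> differentiable (at t)" and vnz: "\<And>t. vel \<gamma> t \<noteq> 0"
    using sph dg dv vnz IUNIV by auto
  have stat: "\<And>t. \<gamma> t \<noteq> - Npole \<Longrightarrow> curv \<gamma> t = \<alpha> * (nrm \<gamma> t \<bullet> xi (\<gamma> t)) / dN (\<gamma> t)"
    using assms(3) IUNIV unfolding alpha_stationary_def by auto
  have Dg: "\<And>t. (\<gamma> has_vector_derivative vel \<gamma> t) (at t)"
    using dg unfolding vel_def by (simp add: vector_derivative_works[symmetric])
  have Dv: "\<And>t. (vel \<gamma> has_vector_derivative acc \<gamma> t) (at t)"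
    using dv unfolding acc_def by (simp add: vector_derivative_works[symmetric])
  define h where "h t = \<gamma> t \<bullet> Npole" for t
  have Dh: "\<And>t. (h has_real_derivative (vel \<gamma> t \<bullet> Npole)) (at t)"
    using inner_deriv[OF Dg has_vector_derivative_const] unfolding h_def by simp
  have Dh': "\<And>t. ((\<lambda>t. vel \<gamma> t \<bullet> Npole) has_real_derivative (acc \<gamma> t \<bullet> Npole)) (at t)"
    using inner_deriv[OF Dv has_vector_derivative_const] by simp
  have gg: "\<And>t. \<gamma> t \<bullet> \<gamma> t = 1" using sph norm_eq_1 by blast
  have gv: "\<And>t. \<gamma> t \<bullet> vel \<gamma> t = 0"
  proof -
    fix t
    have "((\<lambda>t. \<gamma> t \<bullet> \<gamma> t) has_real_derivative (\<gamma> t \<bullet> vel \<gamma> t + vel \<gamma> t \<bullet> \<gamma> t)) (at t)"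
      using inner_deriv[OF Dg Dg] .
    moreover have "((\<lambda>t. \<gamma> t \<bullet> \<gamma> t) has_real_derivative 0) (at t)" using gg by simp
    ultimately have "\<gamma> t \<bullet> vel \<gamma> t + vel \<gamma> t \<bullet> \<gamma> t = 0" by (rule DERIV_unique)
    then show "\<gamma> t \<bullet> vel \<gamma> t = 0" by (simp add: inner_commute)
  qed
  have ga: "\<And>t. \<gamma> t \<bullet> acc \<gamma> t = - (vel \<gamma> t \<bullet> vel \<gamma> t)"
  proof -
    fix t
    have "((\<lambda>t. \<gamma> t \<bullet> vel \<gamma> t) has_real_derivative (\<gamma> t \<bullet> acc \<gamma> t + vel \<gamma> t \<bullet> vel \<gamma> t)) (at t)"
      using inner_deriv[OF Dg Dv] .
    moreover have "((\<lambda>t. \<gamma> t \<bullet> vel \<gamma> t) has_real_derivative 0) (at t)" using gv by simp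
    ultimately have "\<gamma> t \<bullet> acc \<gamma> t + vel \<gamma> t \<bullet> vel \<gamma> t = 0" by (rule DERIV_unique)
    then show "\<gamma> t \<bullet> acc \<gamma> t = - (vel \<gamma> t \<bullet> vel \<gamma> t)" by simp
  qed
  have hc: "continuous_on S h" for S
    using Dh by (meson DERIV_isCont continuous_at_imp_continuous_on)
  obtain t1 where t1: "h t1 > 0" using assms(5) unfolding h_def by auto
  obtain t0 where t0: "t0 \<in> {t1..t1+T}" "\<And>y. y \<in> {t1..t1+T} \<Longrightarrow> h y \<le> h t0"
    using continuous_attains_sup[of "{t1..t1+T}" h] hc T by auto
  define t2 where "t2 = (if t0 = t1 then t1 + T else t0)"
  have t2: "t1 < t2" "t2 \<le> t1 + T" "h t2 = h t0"
    using t0 T T(2)[of t1] unfolding t2_def h_def by auto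
  have hmax: "h y \<le> h t2" if "t1 \<le> y" "y \<le> t1 + 2*T" for y
  proof (cases "y \<le> t1 + T")
    case True then show ?thesis using t0 t2 that by auto
  next
    case False
    then have "h y = h (y - T)" using T(2)[of "y - T"] unfolding h_def by simp
    then show ?thesis using t0(2)[of "y - T"] t2 that False by auto
  qed
  define d where "d = min (t2 - t1) (t1 + 2*T - t2)"
  have d: "d > 0" using t2 T unfolding d_def by auto
  have d1: "d \<le> t2 - t1" "d \<le> t1 + 2*T - t2" unfolding d_def by auto
  have loc: "\<forall>y. \<bar>t2 - y\<bar> < d \<longrightarrow> h y \<le> h t2"
  proof (intro allI impI)
    fix y assume "\<bar>t2 - y\<bar> < d"
    then have "t1 \<le> y" "y \<le> t1 + 2*T" using d1 by (simp_all add: abs_less_iff)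
    then show "h y \<le> h t2" by (rule hmax)
  qed
  have vN: "vel \<gamma> t2 \<bullet> Npole = 0" using DERIV_local_max[OF Dh d loc] .
  have aN: "acc \<gamma> t2 \<bullet> Npole \<le> 0"
  proof (rule ccontr)
    assume "\<not> ?thesis"
    then have pos: "0 < acc \<gamma> t2 \<bullet> Npole" by simp
    obtain e where e: "e > 0" "\<forall>x>0. x < e \<longrightarrow> vel \<gamma> t2 \<bullet> Npole < vel \<gamma> (t2 + x) \<bullet> Npole"
      using DERIV_pos_inc_right[OF Dh' pos] by blast
    define x where "x = min e d / 2"
    have x: "0 < x" "x < e" "x < d" using e d unfolding x_def by auto
    have "h t2 < h (t2 + x)"
    proof (rule DERIV_pos_imp_increasing_open[of t2 "t2+x" h])
      show "t2 < t2 + x" using x by simp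
    next
      fix y assume y: "t2 < y" "y < t2 + x"
      then have "0 < y - t2" "y - t2 < e" using x by simp_all
      then have "vel \<gamma> t2 \<bullet> Npole < vel \<gamma> (t2 + (y - t2)) \<bullet> Npole" using e(2) by blast
      then have "0 < vel \<gamma> y \<bullet> Npole" using vN by simp
      then show "\<exists>z. (h has_real_derivative z) (at y) \<and> 0 < z"
        using Dh[of y] by blast
    next
      show "continuous_on {t2..t2 + x} h" by (rule hc)
    qed
    moreover have "\<bar>t2 - (t2 + x)\<bar> < d" using x by simp
    then have "h (t2 + x) \<le> h t2" using loc by blast
    ultimately show False by simp
  qed
  define p where "p = \<gamma> t2"
  define v where "v = vel \<gamma> t2"
  define a where "a = acc \<gamma> t2"
  define h0 where "h0 = p \<bullet> Npole"
  define c where "c = cross3 v p"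
  define V where "V = norm v"
  have pp: "p \<bullet> p = 1" using gg unfolding p_def by simp
  have pv: "v \<bullet> p = 0" using gv unfolding p_def v_def by (simp add: inner_commute)
  have pa: "a \<bullet> p = - (v \<bullet> v)" using ga unfolding p_def v_def a_def by (simp add: inner_commute)
  have vN': "v \<bullet> Npole = 0" using vN unfolding v_def .
  have aN': "a \<bullet> Npole \<le> 0" using aN unfolding a_def .
  have V: "V > 0" using vnz unfolding V_def v_def by simp
  have vv: "v \<bullet> v = V^2" unfolding V_def by (simp add: power2_norm_eq_inner)
  have h0pos: "h0 > 0"
  proof -
    have "t1 \<in> {t1..t1+T}" using T by simp
    then have "h t1 \<le> h t2" using t0(2) t2(3) by simp
    then show ?thesis using t1 unfolding h0_def p_def h_def by simp
  qed
  have pN: "p \<noteq> Npole" using sph unfolding p_def by simp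
  have h01: "h0 < 1"
  proof (rule ccontr)
    assume "\<not> h0 < 1"
    then have "(p - Npole) \<bullet> (p - Npole) \<le> 0"
      using pp NN unfolding h0_def by (simp add: inner_diff_left inner_diff_right inner_commute)
    then have "p - Npole = 0" using inner_ge_zero[of "p - Npole"] inner_eq_zero_iff[of "p - Npole"] by linarith
    then show False using pN by simp
  qed
  have pmN: "p \<noteq> - Npole" using h0pos NN unfolding h0_def by auto
  define s where "s = sqrt (1 - h0^2)"
  have s: "s > 0" unfolding s_def using h0pos h01
    by (simp add: power2_less_1_iff abs_less_iff)
  have "h0^2 \<le> 1" using h0pos h01 by (simp add: power_le_one)
  then have s2: "s^2 = 1 - h0^2" unfolding s_def by simp
  define u where "u = dN p"
  have u: "u = arccos h0" unfolding u_def dN_def h0_def ..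
  have u0: "0 < u" "u < pi" using arccos_lt_bounded[of h0] h0pos h01 u by auto
  have u2: "u \<le> pi/2" using arccos_le_pi2[of h0] h0pos h01 u by auto
  have cu: "cos u = h0" using u h0pos h01 by simp
  have su: "sin u = s" using u h0pos h01 unfolding s_def by (simp add: sin_arccos_abs)
  have upi2: "u < pi/2"
  proof (rule ccontr)
    assume "\<not> u < pi/2" then have "u = pi/2" using u2 by simp
    then have "cos u = 0" by (metis cos_pi_half)
    then show False using cu h0pos by simp
  qed
  have key: "u * h0 < s" using sin_gt[OF u0(1) upi2] cu su by simp
  have cp: "c \<bullet> p = 0" unfolding c_def by (simp add: dot_cross_self)
  have E: "(a \<bullet> c) / V^3 = \<alpha> * (- (Npole \<bullet> c) / (V * s)) / u"
  proof -
    have "curv \<gamma> t2 = \<alpha> * (nrm \<gamma> t2 \<bullet> xi (\<gamma> t2)) / dN (\<gamma> t2)"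
      using stat pmN unfolding p_def by simp
    moreover have "curv \<gamma> t2 = (a \<bullet> c) / V^3"
      unfolding curv_def nrm_def a_def[symmetric] v_def[symmetric] p_def[symmetric] c_def[symmetric] V_def[symmetric]
      by (simp add: power3_eq_cube power2_eq_square)
    moreover have "nrm \<gamma> t2 \<bullet> xi (\<gamma> t2) = - (Npole \<bullet> c) / (V * s)"
      unfolding nrm_def xi_def v_def[symmetric] p_def[symmetric] c_def[symmetric] V_def[symmetric]
        h0_def[symmetric] s_def[symmetric]
      using cp by (simp add: inner_diff_right inner_commute)
    ultimately show ?thesis unfolding u_def p_def by simp
  qed
  have G1: "(a \<bullet> c) * (Npole \<bullet> c) = V^2 * (a \<bullet> Npole + V^2 * h0)"
    unfolding c_def gram1 using pp pv pa vN' vv unfolding h0_def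
    by (simp add: inner_commute algebra_simps)
  have G2: "(Npole \<bullet> c) * (Npole \<bullet> c) = V^2 * s^2"
  proof -
    have "V^2 * s^2 + h0 * (h0 * V^2) = V^2 * (s^2 + h0^2)" by (simp add: algebra_simps power2_eq_square)
    then have e: "V^2 = V^2 * s^2 + h0 * (h0 * V^2)" using s2 by simp
    show ?thesis
      unfolding c_def gram1 using pp pv vN' vv NN e unfolding h0_def
      by (simp add: inner_commute algebra_simps)
  qed
  show ?thesis using fin[OF V s u0(1) E G1 G2 aN' key] .
qed
end
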